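(* Let $\{(U_{k,i}, V_{k,i}); i \geq 1, k \geq 1\}$ be an array of i.i.d. two-dimensional random vectors and let $\{p_n; n \geq 1\}$ be a sequence of positive integers such that $n/p_n$ is bounded away from $0$ and $\infty$. Let $$T_n = \max_{1 \leq i \neq j \leq p_n} \Big| \sum_{k=1}^n U_{k,i} V_{k,j} \Big|, \quad n \geq 1.$$ Let $\{a_n; n \geq 1\}$ be a nondecreasing sequence of positive constants such that $\lim_{n \to \infty} a_{n+1}/a_n = 1$ and $\liminf_{n \to \infty} a_{2n}/a_n = b \in (1, \infty]$. If $$\limsup_{n \to \infty} \frac{T_n}{a_n} < \infty \quad \text{a.s.},$$ then $\sum_{n=1}^{\infty} P\big(\max_{1 \leq i \neq j \leq n} |U_{1,i} V_{1,j}| \geq a_n\big) < \infty$, and moreover $(EU_{1,1})(EV_{1,1}) = 0$ whenever $\lim_{n \to \infty} a_n/n = 0$. *)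

theory Defs
  imports "HOL-Probability.Probability"
begin

text \<open>The maximum over an empty index set (p_n < 2) is taken to be 0; since all
  terms are nonnegative, inserting 0 does not change the maximum otherwise.\<close>
definition Tstat :: "(nat \<Rightarrow> nat \<Rightarrow> 'a \<Rightarrow> real) \<Rightarrow> (nat \<Rightarrow> nat \<Rightarrow> 'a \<Rightarrow> real) \<Rightarrow> nat \<Rightarrow> nat \<Rightarrow> 'a \<Rightarrow> real"
  where "Tstat U V p n \<omega> =
    Max (insert 0 {\<bar>\<Sum>k=1..n. U k i \<omega> * V k j \<omega>\<bar> | i j.
                     i \<in> {1..p} \<and> j \<in> {1..p} \<and> i \<noteq> j})"

definition Mstat :: "(nat \<Rightarrow> nat \<Rightarrow> 'a \<Rightarrow> real) \<Rightarrow> (nat \<Rightarrow> nat \<Rightarrow> 'a \<Rightarrow> real) \<Rightarrow> nat \<Rightarrow> 'a \<Rightarrow> real"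
  where "Mstat U V n \<omega> =
    Max (insert 0 {\<bar>U 1 i \<omega> * V 1 j \<omega>\<bar> | i j.
                     i \<in> {1..n} \<and> j \<in> {1..n} \<and> i \<noteq> j})"

end

theory Submission
  imports Defs
begin

lemma pairset_eq:
  "{g i j | i j. i \<in> S \<and> j \<in> S \<and> i \<noteq> j} = (\<lambda>(i,j). g i j) ` {(i,j). i \<in> S \<and> j \<in> S \<and> i \<noteq> j}"
  by auto

lemma pairset_finite:
  "finite S \<Longrightarrow> finite {g i j | i j. i \<in> S \<and> j \<in> S \<and> i \<noteq> j}"
  unfolding pairset_eq
  by (rule finite_imageI, rule finite_subset[of _ "S \<times> S"]) auto

lemma Max_pairset_ge:
  fixes g :: "nat \<Rightarrow> nat \<Rightarrow> real"
  assumes "finite S" "0 < x"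
  shows "(x \<le> Max (insert 0 {\<bar>g i j\<bar> | i j. i \<in> S \<and> j \<in> S \<and> i \<noteq> j}))
     \<longleftrightarrow> (\<exists>i\<in>S. \<exists>j\<in>S. i \<noteq> j \<and> x \<le> \<bar>g i j\<bar>)"
proof -
  have fin: "finite (insert 0 {\<bar>g i j\<bar> | i j. i \<in> S \<and> j \<in> S \<and> i \<noteq> j})"
    using pairset_finite[OF assms(1)] by simp
  show ?thesis
    using assms(2) by (subst Max_ge_iff[OF fin]) auto
qed

lemma Max_pairset_member:
  fixes g :: "nat \<Rightarrow> nat \<Rightarrow> real"
  assumes "finite S" "i \<in> S" "j \<in> S" "i \<noteq> j"
  shows "\<bar>g i j\<bar> \<le> Max (insert 0 {\<bar>g i j\<bar> | i j. i \<in> S \<and> j \<in> S \<and> i \<noteq> j})"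
  using pairset_finite[OF assms(1), of "\<lambda>i j. \<bar>g i j\<bar>"] assms
  by (intro Max_ge) auto

lemma Max_pairset_nonneg:
  fixes g :: "nat \<Rightarrow> nat \<Rightarrow> real"
  assumes "finite S"
  shows "0 \<le> Max (insert 0 {\<bar>g i j\<bar> | i j. i \<in> S \<and> j \<in> S \<and> i \<noteq> j})"
  using pairset_finite[OF assms(1), of "\<lambda>i j. \<bar>g i j\<bar>"] 
  by (intro Max_ge) auto

lemma (in prob_space) indep_sets_reindex:
  assumes "indep_sets F (\<phi> ` I)" "inj_on \<phi> I"
  shows "indep_sets (\<lambda>i. F (\<phi> i)) I"
proof (rule indep_setsI)
  show "\<And>i. i \<in> I \<Longrightarrow> F (\<phi> i) \<subseteq> events" using assms(1) unfolding indep_sets_def by auto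
next
  fix A J assume J: "J \<noteq> {}" "J \<subseteq> I" "finite J" "\<forall>j\<in>J. A j \<in> F (\<phi> j)"
  define A' where "A' = (\<lambda>k. A (the_inv_into I \<phi> k))"
  have inv: "\<And>j. j \<in> J \<Longrightarrow> the_inv_into I \<phi> (\<phi> j) = j"
    using J assms(2) by (auto intro: the_inv_into_f_f)
  have "prob (\<Inter>k\<in>\<phi>`J. A' k) = (\<Prod>k\<in>\<phi>`J. prob (A' k))"
    using J inv by (intro indep_setsD[OF assms(1)]) (auto simp: A'_def)
  moreover have "(\<Inter>k\<in>\<phi>`J. A' k) = (\<Inter>j\<in>J. A j)" using inv by (auto simp: A'_def)
  moreover have "(\<Prod>k\<in>\<phi>`J. prob (A' k)) = (\<Prod>j\<in>J. prob (A j))"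
    using inv J assms(2) by (subst prod.reindex) (auto simp: A'_def intro: inj_on_subset)
  ultimately show "prob (\<Inter>j\<in>J. A j) = (\<Prod>j\<in>J. prob (A j))" by simp
qed

lemma (in prob_space) indep_vars_reindex:
  assumes "indep_vars M' X (\<phi> ` I)" "inj_on \<phi> I"
  shows "indep_vars (\<lambda>i. M' (\<phi> i)) (\<lambda>i. X (\<phi> i)) I"
  using assms unfolding indep_vars_def2
  by (auto intro: indep_sets_reindex[where F="\<lambda>i. {X i -` A \<inter> space M |A. A \<in> sets (M' i)}", simplified])


definition Ev :: "(nat \<Rightarrow> nat \<Rightarrow> 'a \<Rightarrow> real) \<Rightarrow> (nat \<Rightarrow> nat \<Rightarrow> 'a \<Rightarrow> real) \<Rightarrow> nat \<Rightarrow> nat set \<Rightarrow> real \<Rightarrow> 'a \<Rightarrow> bool"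
  where "Ev U V k S x \<omega> \<longleftrightarrow> (\<exists>i\<in>S. \<exists>j\<in>S. i \<noteq> j \<and> x \<le> \<bar>U k i \<omega> * V k j \<omega>\<bar>)"

locale iid_setting = prob_space M for M :: "'a measure" +
  fixes U V :: "nat \<Rightarrow> nat \<Rightarrow> 'a \<Rightarrow> real"
  assumes indep: "indep_vars (\<lambda>_. borel :: (real \<times> real) measure)
                  (\<lambda>(k, i) \<omega>. (U k i \<omega>, V k i \<omega>)) {(k, i). 1 \<le> k \<and> 1 \<le> i}"
    and ident: "\<And>k i. 1 \<le> k \<Longrightarrow> 1 \<le> i \<Longrightarrow>
                  distr M (borel :: (real \<times> real) measure) (\<lambda>\<omega>. (U k i \<omega>, V k i \<omega>)) =
                  distr M (borel :: (real \<times> real) measure) (\<lambda>\<omega>. (U 1 1 \<omega>, V 1 1 \<omega>))"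
begin

definition "XX = (\<lambda>(k, i) \<omega>. (U k i \<omega>, V k i \<omega>))"
definition "Idx = {(k::nat, i::nat). 1 \<le> k \<and> 1 \<le> i}"
definition "DD = distr M (borel :: (real \<times> real) measure) (\<lambda>\<omega>. (U 1 1 \<omega>, V 1 1 \<omega>))"

lemma XX_meas: "1 \<le> k \<Longrightarrow> 1 \<le> i \<Longrightarrow> (\<lambda>\<omega>. (U k i \<omega>, V k i \<omega>)) \<in> borel_measurable M"
  using indep unfolding indep_vars_def by auto

lemma U_meas: "1 \<le> k \<Longrightarrow> 1 \<le> i \<Longrightarrow> U k i \<in> borel_measurable M"
proof -
  assume a: "1 \<le> k" "1 \<le> i"
  have f: "fst \<in> borel_measurable (borel :: (real \<times> real) measure)"
    unfolding borel_prod[symmetric] by measurable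
  have "(\<lambda>\<omega>. fst (U k i \<omega>, V k i \<omega>)) \<in> borel_measurable M"
    using measurable_compose[OF XX_meas[OF a] f] .
  then show ?thesis by simp
qed

lemma V_meas: "1 \<le> k \<Longrightarrow> 1 \<le> i \<Longrightarrow> V k i \<in> borel_measurable M"
proof -
  assume a: "1 \<le> k" "1 \<le> i"
  have f: "snd \<in> borel_measurable (borel :: (real \<times> real) measure)"
    unfolding borel_prod[symmetric] by measurable
  have "(\<lambda>\<omega>. snd (U k i \<omega>, V k i \<omega>)) \<in> borel_measurable M"
    using measurable_compose[OF XX_meas[OF a] f] .
  then show ?thesis by simp
qed

lemma key_distr:
  assumes I: "finite I" "I \<noteq> {}" and phi: "inj_on \<phi> I" "\<phi> ` I \<subseteq> Idx"
  shows "distr M (PiM I (\<lambda>_. borel :: (real \<times> real) measure)) (\<lambda>\<omega>. \<lambda>i\<in>I. XX (\<phi> i) \<omega>)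
         = PiM I (\<lambda>_. DD)"
proof -
  have ind: "indep_vars (\<lambda>_. borel :: (real \<times> real) measure) (\<lambda>i. XX (\<phi> i)) I"
    using indep_vars_reindex[OF indep_vars_subset[OF indep phi(2)[unfolded Idx_def]] phi(1)]
    unfolding XX_def by simp
  have rv: "random_variable borel (XX (\<phi> i))" if "i \<in> I" for i
    using phi(2) that XX_meas unfolding Idx_def XX_def by (auto split: prod.splits)
  have "distr M (PiM I (\<lambda>_. borel :: (real \<times> real) measure)) (\<lambda>\<omega>. \<lambda>i\<in>I. XX (\<phi> i) \<omega>)
        = PiM I (\<lambda>i. distr M borel (XX (\<phi> i)))"
    using indep_vars_iff_distr_eq_PiM'[OF I(2) rv] ind by simp
  also have "\<dots> = PiM I (\<lambda>_. DD)"
  proof (rule PiM_cong[OF refl])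
    fix i assume "i \<in> I"
    then obtain k j where kj: "\<phi> i = (k, j)" "1 \<le> k" "1 \<le> j" using phi(2) unfolding Idx_def by auto
    have "XX (\<phi> i) = (\<lambda>\<omega>. (U k j \<omega>, V k j \<omega>))" using kj(1) unfolding XX_def by simp
    then show "distr M borel (XX (\<phi> i)) = DD" using ident[OF kj(2,3)] unfolding DD_def by (simp only:)
  qed
  finally show ?thesis .
qed


end

lemma fst_pi_meas[measurable]:
  "i \<in> I \<Longrightarrow> (\<lambda>y. fst (y i)) \<in> borel_measurable (PiM I (\<lambda>_. borel :: (real \<times> real) measure))"
proof -
  assume i: "i \<in> I"
  have f: "fst \<in> borel_measurable (borel :: (real \<times> real) measure)"
    unfolding borel_prod[symmetric] by measurable
  show ?thesis using measurable_compose[OF measurable_component_singleton[OF i] f] .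
qed
lemma snd_pi_meas[measurable]:
  "i \<in> I \<Longrightarrow> (\<lambda>y. snd (y i)) \<in> borel_measurable (PiM I (\<lambda>_. borel :: (real \<times> real) measure))"
proof -
  assume i: "i \<in> I"
  have f: "snd \<in> borel_measurable (borel :: (real \<times> real) measure)"
    unfolding borel_prod[symmetric] by measurable
  show ?thesis using measurable_compose[OF measurable_component_singleton[OF i] f] .
qed
lemma pi_event_sets:
  assumes "finite I"
  shows "{y \<in> space (PiM I (\<lambda>_. borel :: (real \<times> real) measure)).
           \<exists>i\<in>I. \<exists>j\<in>I. i \<noteq> j \<and> x \<le> \<bar>fst (y i) * snd (y j)\<bar>}
         \<in> sets (PiM I (\<lambda>_. borel :: (real \<times> real) measure))"
proof -
  have *: "{y \<in> space (PiM I (\<lambda>_. borel :: (real \<times> real) measure)).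
           \<exists>i\<in>I. \<exists>j\<in>I. i \<noteq> j \<and> x \<le> \<bar>fst (y i) * snd (y j)\<bar>}
    = (\<Union>i\<in>I. \<Union>j\<in>I - {i}. {y \<in> space (PiM I (\<lambda>_. borel :: (real \<times> real) measure)). x \<le> \<bar>fst (y i) * snd (y j)\<bar>})"
    by (auto, metis)
  have m: "{y \<in> space (PiM I (\<lambda>_. borel :: (real \<times> real) measure)). x \<le> \<bar>fst (y i) * snd (y j)\<bar>}
     \<in> sets (PiM I (\<lambda>_. borel :: (real \<times> real) measure))" if "i \<in> I" "j \<in> I" for i j
  proof -
    have "(\<lambda>y. \<bar>fst (y i) * snd (y j)\<bar>) \<in> borel_measurable (PiM I (\<lambda>_. borel :: (real \<times> real) measure))"
      using fst_pi_meas[OF that(1)] snd_pi_meas[OF that(2)] by measurable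
    then show ?thesis by measurable
  qed
  show ?thesis unfolding * using assms m by (intro sets.finite_UN) auto
qed
context iid_setting
begin

lemma XX_meas': "p \<in> Idx \<Longrightarrow> XX p \<in> borel_measurable M"
  unfolding Idx_def XX_def using XX_meas by (auto split: prod.splits)

lemma Ev_prob_eq:
  assumes S: "finite S" "S \<subseteq> {1..}" and k: "1 \<le> k"
  shows "prob {\<omega>\<in>space M. Ev U V k S x \<omega>} = prob {\<omega>\<in>space M. Ev U V 1 {1..card S} x \<omega>}"
proof (cases "S = {}")
  case True then show ?thesis by (simp add: Ev_def)
next
  case False
  define I where "I = {1..card S}"
  obtain \<psi> where bij: "bij_betw \<psi> I S" using ex_bij_betw_nat_finite_1[OF S(1)] I_def by auto
  have I: "finite I" "I \<noteq> {}" using False S(1) unfolding I_def by (auto simp: Suc_le_eq card_gt_0_iff)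
  define P where "P = PiM I (\<lambda>_. borel :: (real \<times> real) measure)"
  define A where "A = {y \<in> space P. \<exists>i\<in>I. \<exists>j\<in>I. i \<noteq> j \<and> x \<le> \<bar>fst (y i) * snd (y j)\<bar>}"
  have A: "A \<in> sets P" unfolding A_def P_def using pi_event_sets[OF I(1)] .
  define Y1 where "Y1 = (\<lambda>\<omega>. \<lambda>i\<in>I. XX ((\<lambda>i. (k, \<psi> i)) i) \<omega>)"
  define Y2 where "Y2 = (\<lambda>\<omega>. \<lambda>i\<in>I. XX ((\<lambda>i. (1::nat, i)) i) \<omega>)"
  have phi1: "inj_on (\<lambda>i. (k, \<psi> i)) I" "(\<lambda>i. (k, \<psi> i)) ` I \<subseteq> Idx"
    using bij S(2) k unfolding bij_betw_def inj_on_def Idx_def by auto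
  have phi2: "inj_on (\<lambda>i. (1::nat, i)) I" "(\<lambda>i. (1::nat, i)) ` I \<subseteq> Idx"
    unfolding inj_on_def Idx_def I_def by auto
  have Y1m: "Y1 \<in> measurable M P" unfolding Y1_def P_def
    using phi1(2) by (intro measurable_restrict XX_meas') auto
  have Y2m: "Y2 \<in> measurable M P" unfolding Y2_def P_def
    using phi2(2) by (intro measurable_restrict XX_meas') auto
  have D1: "distr M P Y1 = PiM I (\<lambda>_. DD)"
    unfolding Y1_def P_def by (rule key_distr[OF I phi1])
  have D2: "distr M P Y2 = PiM I (\<lambda>_. DD)"
    unfolding Y2_def P_def by (rule key_distr[OF I phi2])
  have spY1: "Y1 \<omega> \<in> space P" for \<omega> unfolding Y1_def P_def by (simp add: space_PiM)
  have spY2: "Y2 \<omega> \<in> space P" for \<omega> unfolding Y2_def P_def by (simp add: space_PiM)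
  have inj: "\<And>i j. i \<in> I \<Longrightarrow> j \<in> I \<Longrightarrow> \<psi> i = \<psi> j \<longleftrightarrow> i = j"
    using bij unfolding bij_betw_def inj_on_def by blast
  have E1: "{\<omega>\<in>space M. Ev U V k S x \<omega>} = Y1 -` A \<inter> space M"
  proof -
    have "Ev U V k S x \<omega> \<longleftrightarrow> (\<exists>i\<in>I. \<exists>j\<in>I. i \<noteq> j \<and> x \<le> \<bar>fst (Y1 \<omega> i) * snd (Y1 \<omega> j)\<bar>)" for \<omega>
    proof -
      have "Ev U V k S x \<omega> \<longleftrightarrow> (\<exists>i\<in>\<psi>`I. \<exists>j\<in>\<psi>`I. i \<noteq> j \<and> x \<le> \<bar>U k i \<omega> * V k j \<omega>\<bar>)"
        using bij unfolding bij_betw_def Ev_def by simp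
      also have "\<dots> \<longleftrightarrow> (\<exists>i\<in>I. \<exists>j\<in>I. \<psi> i \<noteq> \<psi> j \<and> x \<le> \<bar>U k (\<psi> i) \<omega> * V k (\<psi> j) \<omega>\<bar>)"
        by auto
      also have "\<dots> \<longleftrightarrow> (\<exists>i\<in>I. \<exists>j\<in>I. i \<noteq> j \<and> x \<le> \<bar>U k (\<psi> i) \<omega> * V k (\<psi> j) \<omega>\<bar>)"
        using inj by blast
      finally show ?thesis unfolding Y1_def XX_def by simp
    qed
    then show ?thesis unfolding A_def using spY1 by auto
  qed
  have E2: "{\<omega>\<in>space M. Ev U V 1 {1..card S} x \<omega>} = Y2 -` A \<inter> space M"
    unfolding A_def using spY2 by (auto simp: Ev_def Y2_def XX_def I_def)
  show ?thesis
  proof -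
    have "prob (Y1 -` A \<inter> space M) = measure (distr M P Y1) A" by (rule measure_distr[OF Y1m A, symmetric])
    also have "\<dots> = measure (distr M P Y2) A" unfolding D1 D2 ..
    also have "\<dots> = prob (Y2 -` A \<inter> space M)" by (rule measure_distr[OF Y2m A])
    finally show ?thesis unfolding E1 E2 .
  qed
qed

end

context iid_setting
begin

definition "FF q x = prob {\<omega>\<in>space M. Ev U V 1 {1..q} x \<omega>}"

lemma Ev_sets:
  assumes "finite S" "S \<subseteq> {1..}" "1 \<le> k"
  shows "{\<omega>\<in>space M. Ev U V k S x \<omega>} \<in> events"
proof -
  have *: "{\<omega>\<in>space M. Ev U V k S x \<omega>} =
     (\<Union>i\<in>S. \<Union>j\<in>S - {i}. {\<omega>\<in>space M. x \<le> \<bar>U k i \<omega> * V k j \<omega>\<bar>})"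
    unfolding Ev_def by (auto, metis)
  have m: "{\<omega>\<in>space M. x \<le> \<bar>U k i \<omega> * V k j \<omega>\<bar>} \<in> events" if "i \<in> S" "j \<in> S" for i j
  proof -
    have "U k i \<in> borel_measurable M" "V k j \<in> borel_measurable M"
      using that assms U_meas V_meas by auto
    then have "(\<lambda>\<omega>. \<bar>U k i \<omega> * V k j \<omega>\<bar>) \<in> borel_measurable M" by measurable
    then show ?thesis by measurable
  qed
  show ?thesis unfolding * using assms m by (intro sets.finite_UN) auto
qed

lemma Ev_mono_set: "S \<subseteq> S' \<Longrightarrow> Ev U V k S x \<omega> \<Longrightarrow> Ev U V k S' x \<omega>"
  unfolding Ev_def by blast

lemma Ev_anti: "x' \<le> x \<Longrightarrow> Ev U V k S x \<omega> \<Longrightarrow> Ev U V k S x' \<omega>"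
  unfolding Ev_def by force

lemma FF_mono: "q \<le> q' \<Longrightarrow> FF q x \<le> FF q' x"
  unfolding FF_def
  by (rule finite_measure_mono) (auto intro!: Ev_sets elim: Ev_mono_set[rotated])

lemma prob_Ev_le_FF:
  assumes "finite S" "S \<subseteq> {1..}" "1 \<le> k" "card S \<le> q"
  shows "prob {\<omega>\<in>space M. Ev U V k S x \<omega>} \<le> FF q x"
  using Ev_prob_eq[OF assms(1-3), of x] FF_mono[OF assms(4), of x] unfolding FF_def by simp

lemma FF_block:
  assumes m: "m \<le> L * h" and q: "2 * h \<le> q"
  shows "FF m x \<le> real (L * L) * FF q x"
proof -
  define B where "B = (\<lambda>s. {s*h+1..s*h+h})"
  define G where "G = (\<lambda>st. {\<omega>\<in>space M. Ev U V 1 (B (fst st) \<union> B (snd st)) x \<omega>})"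
  have Bsub: "B s \<union> B t \<subseteq> {1..}" for s t unfolding B_def by auto
  have Bcard: "card (B s \<union> B t) \<le> q" for s t
  proof -
    have "card (B s \<union> B t) \<le> card (B s) + card (B t)" by (rule card_Un_le)
    also have "\<dots> = 2 * h" unfolding B_def by simp
    finally show ?thesis using q by simp
  qed
  have sub: "{\<omega>\<in>space M. Ev U V 1 {1..m} x \<omega>} \<subseteq> (\<Union>st\<in>{..<L} \<times> {..<L}. G st)"
  proof
    fix \<omega> assume "\<omega> \<in> {\<omega>\<in>space M. Ev U V 1 {1..m} x \<omega>}"
    then obtain i j where ij: "i \<in> {1..m}" "j \<in> {1..m}" "i \<noteq> j" "x \<le> \<bar>U 1 i \<omega> * V 1 j \<omega>\<bar>"
      and sp: "\<omega> \<in> space M" unfolding Ev_def by auto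
    have hpos: "0 < h" using ij(1) m by (cases "h = 0") auto
    have blk: "\<exists>s<L. r \<in> B s" if "r \<in> {1..m}" for r
    proof -
      define s where "s = (r - 1) div h"
      have "r - 1 < L * h" using that m by auto
      then have "s < L" unfolding s_def using hpos
        by (simp add: div_less_iff_less_mult mult.commute)
      moreover have "r \<in> B s"
      proof -
        have "s * h \<le> r - 1" unfolding s_def by (metis div_mult_mod_eq le_add1)
        moreover have "r - 1 < s * h + h" unfolding s_def using hpos
          by (metis add.commute div_mult_mod_eq mod_less_divisor nat_add_left_cancel_less)
        ultimately show ?thesis using that unfolding B_def by auto
      qed
      ultimately show ?thesis by blast
    qed
    obtain s where s: "s < L" "i \<in> B s" using blk[OF ij(1)] by blast
    obtain t where t: "t < L" "j \<in> B t" using blk[OF ij(2)] by blast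
    have "Ev U V 1 (B s \<union> B t) x \<omega>" unfolding Ev_def using s t ij by blast
    then show "\<omega> \<in> (\<Union>st\<in>{..<L} \<times> {..<L}. G st)" using s t sp unfolding G_def by force
  qed
  have Gev: "G st \<in> events" for st unfolding G_def
    by (rule Ev_sets) (auto simp: B_def)
  have "FF m x \<le> prob (\<Union>st\<in>{..<L} \<times> {..<L}. G st)"
    unfolding FF_def using sub Gev by (intro finite_measure_mono) auto
  also have "\<dots> \<le> (\<Sum>st\<in>{..<L} \<times> {..<L}. prob (G st))"
    using Gev by (intro finite_measure_subadditive_finite) auto
  also have "\<dots> \<le> (\<Sum>st\<in>{..<L} \<times> {..<L}. FF q x)"
    unfolding G_def by (intro sum_mono prob_Ev_le_FF Bsub Bcard) (auto simp: B_def)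
  also have "\<dots> = real (L * L) * FF q x" by simp
  finally show ?thesis .
qed

end

lemma (in prob_space) bc2:
  assumes A: "\<And>n. A n \<in> events"
    and ind: "\<And>m N. m \<le> N \<Longrightarrow> prob (\<Inter>n\<in>{m..N}. space M - A n) = (\<Prod>n\<in>{m..N}. 1 - prob (A n))"
    and div: "\<not> summable (\<lambda>n. prob (A n))"
  shows "AE \<omega> in M. \<forall>m. \<exists>n\<ge>m. \<omega> \<in> A n"
proof -
  have Cev: "(\<Inter>n\<in>{m..}. space M - A n) \<in> events" for m
    using A by (intro sets.countable_INT') auto
  have zero: "prob (\<Inter>n\<in>{m..}. space M - A n) = 0" for m
  proof (rule ccontr)
    define c where "c = prob (\<Inter>n\<in>{m..}. space M - A n)"
    assume "prob (\<Inter>n\<in>{m..}. space M - A n) \<noteq> 0"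
    then have cpos: "0 < c" unfolding c_def using measure_nonneg[of M] by (simp add: less_le)
    have bound: "(\<Sum>n\<in>{m..N}. prob (A n)) \<le> - ln c" for N
    proof (cases "m \<le> N")
      case True
      have "c \<le> prob (\<Inter>n\<in>{m..N}. space M - A n)"
        unfolding c_def using A True by (intro finite_measure_mono) auto
      also have "\<dots> = (\<Prod>n\<in>{m..N}. 1 - prob (A n))" using ind[OF True] .
      also have "\<dots> \<le> (\<Prod>n\<in>{m..N}. exp (- prob (A n)))"
        by (intro prod_mono conjI) (use exp_ge_add_one_self[of "- prob (A _)"] in auto)
      also have "\<dots> = exp (- (\<Sum>n\<in>{m..N}. prob (A n)))"
        by (simp add: exp_sum[symmetric] sum_negf)
      finally have "c \<le> exp (- (\<Sum>n\<in>{m..N}. prob (A n)))" .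
      then have "ln c \<le> - (\<Sum>n\<in>{m..N}. prob (A n))"
        using ln_le_cancel_iff[OF cpos exp_gt_zero] by simp
      then show ?thesis by simp
    next
      case False
      then have "{m..N} = {}" by auto
      then show ?thesis using cpos measure_le_1[of "\<Inter>n\<in>{m..}. space M - A n"] 
        unfolding c_def by simp
    qed
    have "summable (\<lambda>n. prob (A n))"
    proof (rule summableI_nonneg_bounded)
      fix N
      have "(\<Sum>n<N. prob (A n)) \<le> (\<Sum>n\<in>{..<m} \<union> {m..N}. prob (A n))"
        by (intro sum_mono2) auto
      also have "\<dots> = (\<Sum>n<m. prob (A n)) + (\<Sum>n\<in>{m..N}. prob (A n))"
        by (intro sum.union_disjoint) auto
      also have "\<dots> \<le> (\<Sum>n<m. prob (A n)) + - ln c" using bound[of N] by simp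
      finally show "(\<Sum>n<N. prob (A n)) \<le> (\<Sum>n<m. prob (A n)) + - ln c" .
    qed auto
    then show False using div by simp
  qed
  have null: "(\<Inter>n\<in>{m..}. space M - A n) \<in> null_sets M" for m
    using Cev[of m] zero[of m] by (simp add: null_sets_def emeasure_eq_measure)
  show ?thesis
  proof (rule AE_I')
    show "(\<Union>m. \<Inter>n\<in>{m..}. space M - A n) \<in> null_sets M" using null by (intro null_sets_UN) 
    show "{x \<in> space M. \<not> (\<forall>m. \<exists>n\<ge>m. x \<in> A n)} \<subseteq> (\<Union>m. \<Inter>n\<in>{m..}. space M - A n)"
      by auto
  qed
qed

context iid_setting
begin

lemma fst_borel_meas: "fst \<in> borel_measurable (borel :: (real \<times> real) measure)"
  unfolding borel_prod[symmetric] by measurable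
lemma snd_borel_meas: "snd \<in> borel_measurable (borel :: (real \<times> real) measure)"
  unfolding borel_prod[symmetric] by measurable

lemma marg_U:
  assumes "1 \<le> k" "1 \<le> i"
  shows "integral\<^sup>L M (U k i) = integral\<^sup>L M (U 1 1)" "integrable M (U k i) \<longleftrightarrow> integrable M (U 1 1)"
proof -
  have a: "integral\<^sup>L (distr M borel (\<lambda>\<omega>. (U k i \<omega>, V k i \<omega>))) fst = integral\<^sup>L M (U k i)"
    using integral_distr[OF XX_meas[OF assms] fst_borel_meas] by simp
  have b: "integral\<^sup>L (distr M borel (\<lambda>\<omega>. (U 1 1 \<omega>, V 1 1 \<omega>))) fst = integral\<^sup>L M (U 1 1)"
    using integral_distr[OF XX_meas[of 1 1] fst_borel_meas] by simp
  show "integral\<^sup>L M (U k i) = integral\<^sup>L M (U 1 1)" using a b ident[OF assms] by simp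
  have c: "integrable (distr M borel (\<lambda>\<omega>. (U k i \<omega>, V k i \<omega>))) fst = integrable M (U k i)"
    using integrable_distr_eq[OF XX_meas[OF assms] fst_borel_meas] by simp
  have d: "integrable (distr M borel (\<lambda>\<omega>. (U 1 1 \<omega>, V 1 1 \<omega>))) fst = integrable M (U 1 1)"
    using integrable_distr_eq[OF XX_meas[of 1 1] fst_borel_meas] by simp
  show "integrable M (U k i) \<longleftrightarrow> integrable M (U 1 1)" using c d ident[OF assms] by simp
qed

lemma marg_V:
  assumes "1 \<le> k" "1 \<le> i"
  shows "integral\<^sup>L M (V k i) = integral\<^sup>L M (V 1 1)" "integrable M (V k i) \<longleftrightarrow> integrable M (V 1 1)"
proof -
  have a: "integral\<^sup>L (distr M borel (\<lambda>\<omega>. (U k i \<omega>, V k i \<omega>))) snd = integral\<^sup>L M (V k i)"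
    using integral_distr[OF XX_meas[OF assms] snd_borel_meas] by simp
  have b: "integral\<^sup>L (distr M borel (\<lambda>\<omega>. (U 1 1 \<omega>, V 1 1 \<omega>))) snd = integral\<^sup>L M (V 1 1)"
    using integral_distr[OF XX_meas[of 1 1] snd_borel_meas] by simp
  show "integral\<^sup>L M (V k i) = integral\<^sup>L M (V 1 1)" using a b ident[OF assms] by simp
  have c: "integrable (distr M borel (\<lambda>\<omega>. (U k i \<omega>, V k i \<omega>))) snd = integrable M (V k i)"
    using integrable_distr_eq[OF XX_meas[OF assms] snd_borel_meas] by simp
  have d: "integrable (distr M borel (\<lambda>\<omega>. (U 1 1 \<omega>, V 1 1 \<omega>))) snd = integrable M (V 1 1)"
    using integrable_distr_eq[OF XX_meas[of 1 1] snd_borel_meas] by simp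
  show "integrable M (V k i) \<longleftrightarrow> integrable M (V 1 1)" using c d ident[OF assms] by simp
qed

lemma prod_mean:
  assumes k: "1 \<le> k" and iU: "integrable M (U 1 1)" and iV: "integrable M (V 1 1)"
  shows "integrable M (\<lambda>\<omega>. U k 1 \<omega> * V k 2 \<omega>)"
    "integral\<^sup>L M (\<lambda>\<omega>. U k 1 \<omega> * V k 2 \<omega>) = integral\<^sup>L M (U 1 1) * integral\<^sup>L M (V 1 1)"
proof -
  define I where "I = {1::nat, 2}"
  define Z where "Z = (\<lambda>i::nat. if i = 1 then U k 1 else V k 2)"
  have ind0: "indep_vars (\<lambda>_. borel :: (real \<times> real) measure) (\<lambda>i. XX ((\<lambda>i. (k, i)) i)) I"
  proof -
    have "indep_vars (\<lambda>_. borel :: (real \<times> real) measure) XX ((\<lambda>i. (k, i)) ` I)"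
      using indep_vars_subset[OF indep, of "(\<lambda>i. (k, i)) ` I"] k unfolding XX_def I_def by auto
    then show ?thesis using indep_vars_reindex[of "\<lambda>_. borel" XX "\<lambda>i. (k, i)" I]
      unfolding inj_on_def by auto
  qed
  have ind: "indep_vars (\<lambda>_. borel) Z I"
  proof -
    have "indep_vars (\<lambda>_. borel) (\<lambda>i x. (if i = 1 then fst else snd) (XX (k, i) x)) I"
      by (rule indep_vars_compose2[OF ind0]) (auto simp: fst_borel_meas snd_borel_meas)
    moreover have "indep_vars (\<lambda>_. borel) (\<lambda>i x. (if i = 1 then fst else snd) (XX (k, i) x)) I
       = indep_vars (\<lambda>_. borel) Z I"
    proof (rule indep_vars_cong[OF refl])
      fix i assume "i \<in> I"
      then show "(\<lambda>x. (if i = 1 then fst else snd) (XX (k, i) x)) = Z i"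
        unfolding Z_def XX_def I_def by auto
    qed (rule refl)
    ultimately show ?thesis by simp
  qed
  have intZ: "integrable M (Z i)" if "i \<in> I" for i
    using that marg_U(2)[OF k, of 1] marg_V(2)[OF k, of 2] iU iV unfolding Z_def I_def by auto
  have pr: "(\<Prod>i\<in>I. Z i \<omega>) = U k 1 \<omega> * V k 2 \<omega>" for \<omega> unfolding I_def Z_def by simp
  have pr2: "(\<Prod>i\<in>I. integral\<^sup>L M (Z i)) = integral\<^sup>L M (U k 1) * integral\<^sup>L M (V k 2)"
    unfolding I_def Z_def by simp
  have fI: "finite I" unfolding I_def by simp
  have "integrable M (\<lambda>\<omega>. \<Prod>i\<in>I. Z i \<omega>)"
    by (rule indep_vars_integrable[OF fI ind intZ])
  then show "integrable M (\<lambda>\<omega>. U k 1 \<omega> * V k 2 \<omega>)" unfolding pr .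
  have "integral\<^sup>L M (\<lambda>\<omega>. \<Prod>i\<in>I. Z i \<omega>) = (\<Prod>i\<in>I. integral\<^sup>L M (Z i))"
    by (rule indep_vars_lebesgue_integral[OF fI ind intZ])
  then show "integral\<^sup>L M (\<lambda>\<omega>. U k 1 \<omega> * V k 2 \<omega>) = integral\<^sup>L M (U 1 1) * integral\<^sup>L M (V 1 1)"
    unfolding pr pr2 using marg_U(1)[OF k, of 1] marg_V(1)[OF k, of 2] by simp
qed

lemma same_fun_integral:
  fixes G :: "real \<Rightarrow> real"
  assumes k: "1 \<le> k" and G: "G \<in> borel_measurable borel"
  shows "integral\<^sup>L M (\<lambda>\<omega>. G (U k 1 \<omega> * V k 2 \<omega>)) = integral\<^sup>L M (\<lambda>\<omega>. G (U 1 1 \<omega> * V 1 2 \<omega>))"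
proof -
  define I where "I = {1::nat, 2}"
  define P where "P = PiM I (\<lambda>_. borel :: (real \<times> real) measure)"
  define H where "H = (\<lambda>y. G (fst (y (1::nat)) * snd (y 2)))"
  have m1: "(\<lambda>y. fst (y (1::nat)) * snd (y 2)) \<in> borel_measurable P" unfolding P_def
    by (intro borel_measurable_times fst_pi_meas snd_pi_meas) (auto simp: I_def)
  have Hm: "H \<in> borel_measurable P" unfolding H_def using measurable_compose[OF m1 G] .
  have I: "finite I" "I \<noteq> {}" unfolding I_def by auto
  have gen: "integral\<^sup>L M (\<lambda>\<omega>. G (U j 1 \<omega> * V j 2 \<omega>)) = integral\<^sup>L (PiM I (\<lambda>_. DD)) H" if j: "1 \<le> j" for j
  proof -
    have phi: "inj_on (\<lambda>i. (j, i)) I" "(\<lambda>i. (j, i)) ` I \<subseteq> Idx" using j unfolding inj_on_def Idx_def I_def by auto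
    have Ym: "(\<lambda>\<omega>. \<lambda>i\<in>I. XX ((\<lambda>i. (j, i)) i) \<omega>) \<in> measurable M P"
      unfolding P_def using phi(2) by (intro measurable_restrict XX_meas') auto
    have "integral\<^sup>L (distr M P (\<lambda>\<omega>. \<lambda>i\<in>I. XX ((\<lambda>i. (j, i)) i) \<omega>)) H
       = integral\<^sup>L M (\<lambda>\<omega>. H (\<lambda>i\<in>I. XX ((\<lambda>i. (j, i)) i) \<omega>))"
      by (rule integral_distr[OF Ym Hm])
    also have "\<dots> = integral\<^sup>L M (\<lambda>\<omega>. G (U j 1 \<omega> * V j 2 \<omega>))"
      unfolding H_def XX_def I_def by simp
    finally show ?thesis using key_distr[OF I phi] unfolding P_def by simp
  qed
  show ?thesis using gen[OF k] gen[of 1] by simp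
qed

end

lemma pi_event_sets2:
  assumes "finite S" "\<And>i. i \<in> S \<Longrightarrow> (n, i) \<in> K"
  shows "{y \<in> space (PiM K (\<lambda>_. borel :: (real \<times> real) measure)).
           \<exists>i\<in>S. \<exists>j\<in>S. i \<noteq> j \<and> x \<le> \<bar>fst (y (n, i)) * snd (y (n, j))\<bar>}
         \<in> sets (PiM K (\<lambda>_. borel :: (real \<times> real) measure))"
proof -
  have *: "{y \<in> space (PiM K (\<lambda>_. borel :: (real \<times> real) measure)).
           \<exists>i\<in>S. \<exists>j\<in>S. i \<noteq> j \<and> x \<le> \<bar>fst (y (n, i)) * snd (y (n, j))\<bar>}
    = (\<Union>i\<in>S. \<Union>j\<in>S - {i}. {y \<in> space (PiM K (\<lambda>_. borel :: (real \<times> real) measure)). x \<le> \<bar>fst (y (n, i)) * snd (y (n, j))\<bar>})"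
    by (auto, metis)
  have m: "{y \<in> space (PiM K (\<lambda>_. borel :: (real \<times> real) measure)). x \<le> \<bar>fst (y (n, i)) * snd (y (n, j))\<bar>}
     \<in> sets (PiM K (\<lambda>_. borel :: (real \<times> real) measure))" if "i \<in> S" "j \<in> S" for i j
  proof -
    have "(\<lambda>y. \<bar>fst (y (n, i)) * snd (y (n, j))\<bar>) \<in> borel_measurable (PiM K (\<lambda>_. borel :: (real \<times> real) measure))"
      using fst_pi_meas[OF assms(2)[OF that(1)]] snd_pi_meas[OF assms(2)[OF that(2)]] by measurable
    then show ?thesis by measurable
  qed
  show ?thesis unfolding * using assms m by (intro sets.finite_UN) auto
qed

lemma INT_Suc_shift: "(\<Inter>n\<in>{Suc m..Suc N}. G n) = (\<Inter>n\<in>{m..N}. G (Suc n))"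
proof -
  have e1: "{Suc m..Suc N} = Suc ` {m..N}" by (simp add: image_Suc_atLeastAtMost)
  show ?thesis unfolding e1 image_image by (rule refl)
qed

lemma prod_Suc_shift: "(\<Prod>n\<in>{Suc m..Suc N}. g n) = (\<Prod>n\<in>{m..N}. g (Suc n))"
proof -
  have e1: "{Suc m..Suc N} = Suc ` {m..N}" by (simp add: image_Suc_atLeastAtMost)
  have "prod g (Suc ` {m..N}) = prod (g \<circ> Suc) {m..N}" by (rule prod.reindex) simp
  then show ?thesis unfolding e1 comp_def .
qed

context iid_setting
begin

lemma rows_indep:
  fixes q :: "nat \<Rightarrow> nat" and x :: "nat \<Rightarrow> real"
  assumes "1 \<le> m" "m \<le> N"
  shows "prob (\<Inter>n\<in>{m..N}. space M - {\<omega>\<in>space M. Ev U V n {1..q n} (x n) \<omega>})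
       = (\<Prod>n\<in>{m..N}. 1 - prob {\<omega>\<in>space M. Ev U V n {1..q n} (x n) \<omega>})"
proof -
  define K where "K = (\<lambda>n::nat. (\<lambda>i. (n, i)) ` {1..q n})"
  define L where "L = {1::nat..}"
  define P where "P = (\<lambda>n. PiM (K n) (\<lambda>_. borel :: (real \<times> real) measure))"
  define Y where "Y = (\<lambda>n \<omega>. restrict (\<lambda>p. (\<lambda>(k, i) \<omega>. (U k i \<omega>, V k i \<omega>)) p \<omega>) (K n))"
  have KI: "K n \<subseteq> {(k, i). 1 \<le> k \<and> 1 \<le> i}" if "n \<in> L" for n
    using that unfolding K_def L_def by auto
  have disj: "disjoint_family_on K L" unfolding disjoint_family_on_def K_def by auto
  have ind: "indep_vars P Y L"
    unfolding P_def Y_def using indep_vars_restrict[OF indep KI disj] by simp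
  define B where "B = (\<lambda>n. space (P n) - {y \<in> space (P n).
           \<exists>i\<in>{1..q n}. \<exists>j\<in>{1..q n}. i \<noteq> j \<and> x n \<le> \<bar>fst (y (n, i)) * snd (y (n, j))\<bar>})"
  have Bs: "B n \<in> sets (P n)" for n
    unfolding B_def P_def by (intro sets.compl_sets pi_event_sets2) (auto simp: K_def)
  have pre: "Y n -` B n \<inter> space M = space M - {\<omega>\<in>space M. Ev U V n {1..q n} (x n) \<omega>}" for n
  proof -
    have "Y n \<omega> \<in> space (P n)" for \<omega> unfolding Y_def P_def by (simp add: space_PiM)
    moreover have "(\<exists>i\<in>{1..q n}. \<exists>j\<in>{1..q n}. i \<noteq> j \<and> x n \<le> \<bar>fst (Y n \<omega> (n, i)) * snd (Y n \<omega> (n, j))\<bar>)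
       \<longleftrightarrow> Ev U V n {1..q n} (x n) \<omega>" for \<omega>
      unfolding Y_def Ev_def K_def by auto
    ultimately show ?thesis unfolding B_def by auto
  qed
  have Aev: "{\<omega>\<in>space M. Ev U V n {1..q n} (x n) \<omega>} \<in> events" if "1 \<le> n" for n
    using that by (intro Ev_sets) auto
  have "prob (\<Inter>n\<in>{m..N}. Y n -` B n \<inter> space M) = (\<Prod>n\<in>{m..N}. prob (Y n -` B n \<inter> space M))"
    using assms Bs by (intro indep_varsD[OF ind]) (auto simp: L_def)
  moreover have "prob (Y n -` B n \<inter> space M) = 1 - prob {\<omega>\<in>space M. Ev U V n {1..q n} (x n) \<omega>}"
    if "n \<in> {m..N}" for n
    unfolding pre using that assms by (intro prob_compl Aev) auto
  ultimately show ?thesis unfolding pre by simp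
qed


lemma exists_C_summable:
  fixes q :: "nat \<Rightarrow> nat" and x :: "nat \<Rightarrow> real"
  assumes xpos: "\<And>n. 1 \<le> n \<Longrightarrow> 0 \<le> x n"
    and bound: "AE \<omega> in M. \<exists>C::nat. \<forall>\<^sub>F n in sequentially. \<not> Ev U V n {1..q n} (real C * x n) \<omega>"
  shows "\<exists>C::nat. 1 \<le> C \<and> summable (\<lambda>n. prob {\<omega>\<in>space M. Ev U V n {1..q n} (real C * x n) \<omega>})"
proof (rule ccontr)
  assume "\<not> ?thesis"
  then have ns: "\<not> summable (\<lambda>n. prob {\<omega>\<in>space M. Ev U V n {1..q n} (real C * x n) \<omega>})" if "1 \<le> C" for C
    using that by blast
  have io: "AE \<omega> in M. \<forall>m. \<exists>n\<ge>m. \<omega> \<in> {\<omega>\<in>space M. Ev U V (Suc n) {1..q (Suc n)} (real C * x (Suc n)) \<omega>}"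
    if C: "1 \<le> C" for C
  proof (rule bc2)
    show "{\<omega>\<in>space M. Ev U V (Suc n) {1..q (Suc n)} (real C * x (Suc n)) \<omega>} \<in> events" for n
      by (intro Ev_sets) auto
    show "prob (\<Inter>n\<in>{m..N}. space M - {\<omega>\<in>space M. Ev U V (Suc n) {1..q (Suc n)} (real C * x (Suc n)) \<omega>})
       = (\<Prod>n\<in>{m..N}. 1 - prob {\<omega>\<in>space M. Ev U V (Suc n) {1..q (Suc n)} (real C * x (Suc n)) \<omega>})"
      if "m \<le> N" for m N
    proof -
      have r: "prob (\<Inter>n\<in>{Suc m..Suc N}. space M - {\<omega>\<in>space M. Ev U V n {1..q n} (real C * x n) \<omega>})
       = (\<Prod>n\<in>{Suc m..Suc N}. 1 - prob {\<omega>\<in>space M. Ev U V n {1..q n} (real C * x n) \<omega>})"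
        using that by (intro rows_indep) auto
      show ?thesis using r unfolding INT_Suc_shift prod_Suc_shift .
    qed
    show "\<not> summable (\<lambda>n. prob {\<omega>\<in>space M. Ev U V (Suc n) {1..q (Suc n)} (real C * x (Suc n)) \<omega>})"
      using ns[OF C] summable_Suc_iff[of "\<lambda>n. prob {\<omega>\<in>space M. Ev U V n {1..q n} (real C * x n) \<omega>}"]
      by simp
  qed
  have "AE \<omega> in M. \<forall>C::nat. 1 \<le> C \<longrightarrow> (\<forall>m. \<exists>n\<ge>m. \<omega> \<in> {\<omega>\<in>space M. Ev U V (Suc n) {1..q (Suc n)} (real C * x (Suc n)) \<omega>})"
    unfolding AE_all_countable using io by auto
  then have "AE \<omega> in M. False" using bound
  proof eventually_elim
    case (elim \<omega>)
    from elim(2) obtain C0 :: nat where ev: "\<forall>\<^sub>F n in sequentially. \<not> Ev U V n {1..q n} (real C0 * x n) \<omega>"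
      by blast
    then obtain N where N: "\<And>n. N \<le> n \<Longrightarrow> \<not> Ev U V n {1..q n} (real C0 * x n) \<omega>"
      unfolding eventually_sequentially by blast
    define C where "C = max C0 1"
    have C1: "1 \<le> C" unfolding C_def by simp
    obtain n where n: "n \<ge> N" "Ev U V (Suc n) {1..q (Suc n)} (real C * x (Suc n)) \<omega>"
      using elim(1) C1 by blast
    have "real C0 * x (Suc n) \<le> real C * x (Suc n)"
      using xpos[of "Suc n"] unfolding C_def by (intro mult_right_mono) auto
    then have "Ev U V (Suc n) {1..q (Suc n)} (real C0 * x (Suc n)) \<omega>"
      using Ev_anti n(2) by blast
    then show False using N[of "Suc n"] n(1) by simp
  qed
  then show False by (simp add: AE_False)
qed

end

lemma sum_div_block:
  fixes g :: "nat \<Rightarrow> real"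
  assumes K: "0 < K"
  shows "(\<Sum>n<K*N. g (n div K)) = real K * (\<Sum>m<N. g m)"
proof (induction N)
  case 0 then show ?case by simp
next
  case (Suc N)
  have u: "{..<K * Suc N} = {..<K*N} \<union> {K*N..<K*N+K}" by auto
  have c: "(\<Sum>n\<in>{K*N..<K*N+K}. g (n div K)) = (\<Sum>n\<in>{K*N..<K*N+K}. g N)"
  proof (rule sum.cong[OF refl])
    fix n assume "n \<in> {K*N..<K*N+K}"
    then have "n div K = N" by (intro div_nat_eqI) auto
    then show "g (n div K) = g N" by simp
  qed
  have "(\<Sum>n<K * Suc N. g (n div K)) = (\<Sum>n<K*N. g (n div K)) + (\<Sum>n\<in>{K*N..<K*N+K}. g (n div K))"
    unfolding u by (intro sum.union_disjoint) auto
  also have "\<dots> = real K * (\<Sum>m<N. g m) + real K * g N" using Suc c by simp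
  also have "\<dots> = real K * (\<Sum>m<Suc N. g m)" by (simp add: algebra_simps)
  finally show ?case .
qed

lemma summable_div_block:
  fixes g :: "nat \<Rightarrow> real"
  assumes K: "0 < K" and nn: "\<And>n. 0 \<le> g n" and s: "summable g"
  shows "summable (\<lambda>n. g (n div K))"
proof (rule summableI_nonneg_bounded)
  fix N
  have "(\<Sum>n<N. g (n div K)) \<le> (\<Sum>n<K*N. g (n div K))"
    using K nn by (intro sum_mono2) auto
  also have "\<dots> = real K * (\<Sum>m<N. g m)" by (rule sum_div_block[OF K])
  also have "\<dots> \<le> real K * suminf g"
    using s nn by (intro mult_left_mono sum_le_suminf) auto
  finally show "(\<Sum>n<N. g (n div K)) \<le> real K * suminf g" .
qed (use nn in auto)

lemma sum_transfer:
  fixes F :: "nat \<Rightarrow> real \<Rightarrow> real" and a :: "nat \<Rightarrow> real" and q :: "nat \<Rightarrow> nat" and C :: real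
  assumes Fnn: "\<And>m x. 0 \<le> F m x"
    and Fanti: "\<And>m x y. x \<le> y \<Longrightarrow> F m y \<le> F m x"
    and Fblock: "\<And>m L h q x. m \<le> L * h \<Longrightarrow> 2 * h \<le> q \<Longrightarrow> F m x \<le> real (L * L) * F q x"
    and summ: "summable (\<lambda>n. F (q n) (C * a n))"
    and a_pos: "\<And>n. 1 \<le> n \<Longrightarrow> 0 < a n"
    and a_mono: "\<And>m n. 1 \<le> m \<Longrightarrow> m \<le> n \<Longrightarrow> a m \<le> a n"
    and doubling: "1 < \<beta>" "\<And>n. N0 \<le> n \<Longrightarrow> \<beta> * a n \<le> a (2 * n)"
    and qlow: "0 < c" "\<And>m. Nq \<le> m \<Longrightarrow> c * real m \<le> real (q m div 2)"
  shows "summable (\<lambda>n. F n (a n))"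
proof -
  obtain r where r: "C < \<beta> ^ r" using real_arch_pow[OF doubling(1)] by blast
  define K :: nat where "K = 2 ^ r"
  have Kpos: "0 < K" unfolding K_def by simp
  have pow: "\<beta> ^ s * a m \<le> a (2 ^ s * m)" if "N0 \<le> m" "1 \<le> m" for s m
  proof (induction s)
    case 0 then show ?case by simp
  next
    case (Suc s)
    have "\<beta> ^ Suc s * a m = \<beta> * (\<beta> ^ s * a m)" by simp
    also have "\<dots> \<le> \<beta> * a (2 ^ s * m)" using Suc doubling(1) by (intro mult_left_mono) auto
    also have "\<dots> \<le> a (2 * (2 ^ s * m))"
    proof (rule doubling(2))
      have "m \<le> 2 ^ s * m" by simp
      then show "N0 \<le> 2 ^ s * m" using that by linarith
    qed
    finally show ?case by (simp add: mult.assoc)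
  qed
  define N1 where "N1 = max (max N0 1) Nq"
  define L :: nat where "L = nat \<lceil>2 * real K / c\<rceil>"
  define g where "g = (\<lambda>m. real (L * L) * F (q m) (C * a m))"
  have key: "F n (a n) \<le> g (n div K)" if n: "K * N1 \<le> n" for n
  proof -
    define m where "m = n div K"
    have mN1: "N1 \<le> m" unfolding m_def using n Kpos
      by (metis div_le_mono nonzero_mult_div_cancel_left not_gr0)
    then have m1: "1 \<le> m" "N0 \<le> m" "Nq \<le> m" unfolding N1_def by auto
    have Km: "K * m \<le> n" unfolding m_def by (metis div_mult_mod_eq le_add1 mult.commute)
    have nlt: "n < K * (m + 1)" unfolding m_def using Kpos
      by (metis add.commute div_mult_mod_eq mod_less_divisor mult.commute mult_Suc_right nat_add_left_cancel_less Suc_eq_plus1)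
    have "C * a m \<le> \<beta> ^ r * a m" using r a_pos[OF m1(1)] by (intro mult_right_mono) auto
    also have "\<dots> \<le> a (K * m)" unfolding K_def using pow[OF m1(2) m1(1)] .
    also have "\<dots> \<le> a n" using Km m1(1) Kpos by (intro a_mono) (auto simp: Suc_le_eq)
    finally have Ca: "C * a m \<le> a n" .
    have "F n (a n) \<le> F n (C * a m)" by (rule Fanti[OF Ca])
    also have "\<dots> \<le> real (L * L) * F (q m) (C * a m)"
    proof (rule Fblock)
      show "2 * (q m div 2) \<le> q m" by simp
      have "real n < real K * (real m + 1)" using nlt by (metis of_nat_1 of_nat_add of_nat_less_iff of_nat_mult)
      also have "\<dots> \<le> 2 * real K * real m"
      proof -
        have "real m + 1 \<le> 2 * real m" using m1(1) by simp
        then have "real K * (real m + 1) \<le> real K * (2 * real m)" by (rule mult_left_mono) simp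
        then show ?thesis by (simp add: algebra_simps)
      qed
      also have "\<dots> = (2 * real K / c) * (c * real m)" using qlow(1) by simp
      also have "\<dots> \<le> real L * real (q m div 2)"
      proof (rule mult_mono)
        show "2 * real K / c \<le> real L" unfolding L_def by linarith
        show "c * real m \<le> real (q m div 2)" using qlow(2)[OF m1(3)] .
      qed (use qlow(1) in auto)
      finally show "n \<le> L * (q m div 2)" by (metis less_imp_le of_nat_le_iff of_nat_mult)
    qed
    finally show ?thesis unfolding g_def m_def .
  qed
  have gnn: "0 \<le> g m" for m unfolding g_def using Fnn by simp
  have "summable g" unfolding g_def using summ by (rule summable_mult)
  then have "summable (\<lambda>n. g (n div K))" using summable_div_block[of K g] Kpos gnn by blast
  then show ?thesis
    by (rule summable_comparison_test'[where N="K * N1"]) (use key Fnn in auto)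
qed

context iid_setting
begin

lemma mean_zero:
  assumes conv: "AE \<omega> in M. (\<lambda>n. (\<Sum>k=1..n. U k 1 \<omega> * V k 2 \<omega>) / real n) \<longlonglongrightarrow> 0"
  shows "integral\<^sup>L M (U 1 1) * integral\<^sup>L M (V 1 1) = 0"
proof (cases "integrable M (U 1 1) \<and> integrable M (V 1 1)")
  case False
  then show ?thesis using not_integrable_integral_eq by auto
next
  case True
  define \<mu> where "\<mu> = integral\<^sup>L M (U 1 1) * integral\<^sup>L M (V 1 1)"
  define X where "X = (\<lambda>k \<omega>. U k 1 \<omega> * V k 2 \<omega>)"
  define Y where "Y = (\<lambda>n \<omega>. (\<Sum>k\<in>{1..n}. X k \<omega>) / real n)"
  define \<delta> where "\<delta> = (\<lambda>K. integral\<^sup>L M (\<lambda>\<omega>. max 0 (\<bar>X 1 \<omega>\<bar> - K)))"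
  have measX: "X k \<in> borel_measurable M" if "1 \<le> k" for k
    unfolding X_def using U_meas[OF that, of 1] V_meas[OF that, of 2] by measurable
  have intX: "integrable M (X k)" if "1 \<le> k" for k
    unfolding X_def using prod_mean(1)[OF that] True by auto
  have EX: "integral\<^sup>L M (X k) = \<mu>" if "1 \<le> k" for k
    unfolding X_def \<mu>_def using prod_mean(2)[OF that] True by auto
  have measY: "Y n \<in> borel_measurable M" for n
    unfolding Y_def using measX by (intro borel_measurable_divide borel_measurable_sum) auto
  have intY: "integrable M (Y n)" for n
    unfolding Y_def using intX by (intro integrable_divide_zero integrable_sum) auto
  have intT: "integrable M (\<lambda>\<omega>. max 0 (\<bar>X k \<omega>\<bar> - K))" if "1 \<le> k" "0 \<le> K" for k K
  proof (rule Bochner_Integration.integrable_bound[OF intX[OF that(1)]])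
    show "(\<lambda>\<omega>. max 0 (\<bar>X k \<omega>\<bar> - K)) \<in> borel_measurable M" using measX[OF that(1)] by measurable
    show "AE x in M. norm (max 0 (\<bar>X k x\<bar> - K)) \<le> norm (X k x)" using that(2) by auto
  qed
  have intMin: "integrable M (\<lambda>\<omega>. min \<bar>Y n \<omega>\<bar> K)" if "0 \<le> K" for n K
  proof (rule Bochner_Integration.integrable_bound[OF intY])
    show "(\<lambda>\<omega>. min \<bar>Y n \<omega>\<bar> K) \<in> borel_measurable M" using measY by measurable
    show "AE x in M. norm (min \<bar>Y n x\<bar> K) \<le> norm (Y n x)" using that by auto
  qed
  have deq: "integral\<^sup>L M (\<lambda>\<omega>. max 0 (\<bar>X k \<omega>\<bar> - K)) = \<delta> K" if "1 \<le> k" for k K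
  proof -
    have G: "(\<lambda>z::real. max 0 (\<bar>z\<bar> - K)) \<in> borel_measurable borel" by measurable
    show ?thesis unfolding \<delta>_def X_def using same_fun_integral[OF that G] by simp
  qed
  have bound: "\<bar>\<mu>\<bar> \<le> integral\<^sup>L M (\<lambda>\<omega>. min \<bar>Y n \<omega>\<bar> K) + \<delta> K" if n: "1 \<le> n" and K: "0 \<le> K" for n K
  proof -
    have EY: "integral\<^sup>L M (Y n) = \<mu>"
    proof -
      have "integral\<^sup>L M (Y n) = (\<Sum>k\<in>{1..n}. integral\<^sup>L M (X k)) / real n"
        unfolding Y_def using intX by (simp add: integral_sum)
      also have "\<dots> = \<mu>" using EX n by simp
      finally show ?thesis .
    qed
    define g where "g = (\<lambda>\<omega>. min \<bar>Y n \<omega>\<bar> K + (\<Sum>k\<in>{1..n}. max 0 (\<bar>X k \<omega>\<bar> - K)) / real n)"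
    have pw: "\<bar>Y n \<omega>\<bar> \<le> g \<omega>" for \<omega>
    proof -
      have s1: "(\<Sum>k\<in>{1..n}. \<bar>X k \<omega>\<bar> - K) \<le> (\<Sum>k\<in>{1..n}. max 0 (\<bar>X k \<omega>\<bar> - K))"
        by (intro sum_mono) auto
      have s2: "(\<Sum>k\<in>{1..n}. \<bar>X k \<omega>\<bar> - K) = (\<Sum>k\<in>{1..n}. \<bar>X k \<omega>\<bar>) - real n * K"
        by (simp add: sum_subtractf)
      have s3: "\<bar>\<Sum>k\<in>{1..n}. X k \<omega>\<bar> \<le> (\<Sum>k\<in>{1..n}. \<bar>X k \<omega>\<bar>)" by (rule sum_abs)
      have s4: "0 \<le> (\<Sum>k\<in>{1..n}. max 0 (\<bar>X k \<omega>\<bar> - K))" by (intro sum_nonneg) auto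
      have npos: "0 < real n" using n by simp
      have "\<bar>Y n \<omega>\<bar> - K \<le> (\<Sum>k\<in>{1..n}. max 0 (\<bar>X k \<omega>\<bar> - K)) / real n"
      proof -
        have "\<bar>Y n \<omega>\<bar> = \<bar>\<Sum>k\<in>{1..n}. X k \<omega>\<bar> / real n" unfolding Y_def using npos by simp
        also have "\<dots> \<le> ((\<Sum>k\<in>{1..n}. max 0 (\<bar>X k \<omega>\<bar> - K)) + real n * K) / real n"
        proof (rule divide_right_mono)
          show "\<bar>\<Sum>k\<in>{1..n}. X k \<omega>\<bar> \<le> (\<Sum>k\<in>{1..n}. max 0 (\<bar>X k \<omega>\<bar> - K)) + real n * K"
            using s1 s2 s3 by linarith
        qed (use npos in simp)
        also have "\<dots> = (\<Sum>k\<in>{1..n}. max 0 (\<bar>X k \<omega>\<bar> - K)) / real n + K"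
          using npos by (simp add: field_simps)
        finally show ?thesis by simp
      qed
      moreover have "0 \<le> (\<Sum>k\<in>{1..n}. max 0 (\<bar>X k \<omega>\<bar> - K)) / real n" using s4 npos by simp
      ultimately show ?thesis unfolding g_def by linarith
    qed
    have intg: "integrable M g" unfolding g_def
      using intMin[OF K] intT K by (intro Bochner_Integration.integrable_add integrable_divide_zero integrable_sum) auto
    have "\<bar>\<mu>\<bar> \<le> integral\<^sup>L M g"
    proof -
      have "\<bar>integral\<^sup>L M (Y n)\<bar> \<le> integral\<^sup>L M (\<lambda>\<omega>. \<bar>Y n \<omega>\<bar>)"
        using integral_norm_bound[of M "Y n"] by simp
      also have "\<dots> \<le> integral\<^sup>L M g"
        by (rule integral_mono) (use intY[of n] intg pw in auto)
      finally show ?thesis unfolding EY .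
    qed
    also have "integral\<^sup>L M g = integral\<^sup>L M (\<lambda>\<omega>. min \<bar>Y n \<omega>\<bar> K)
        + (\<Sum>k\<in>{1..n}. integral\<^sup>L M (\<lambda>\<omega>. max 0 (\<bar>X k \<omega>\<bar> - K))) / real n"
    proof -
      have i2: "integrable M (\<lambda>\<omega>. (\<Sum>k\<in>{1..n}. max 0 (\<bar>X k \<omega>\<bar> - K)) / real n)"
        using intT K by (intro integrable_divide_zero integrable_sum) auto
      have "integral\<^sup>L M g = integral\<^sup>L M (\<lambda>\<omega>. min \<bar>Y n \<omega>\<bar> K)
          + integral\<^sup>L M (\<lambda>\<omega>. (\<Sum>k\<in>{1..n}. max 0 (\<bar>X k \<omega>\<bar> - K)) / real n)"
        unfolding g_def by (rule Bochner_Integration.integral_add[OF intMin[OF K] i2])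
      also have "integral\<^sup>L M (\<lambda>\<omega>. (\<Sum>k\<in>{1..n}. max 0 (\<bar>X k \<omega>\<bar> - K)) / real n)
          = (\<Sum>k\<in>{1..n}. integral\<^sup>L M (\<lambda>\<omega>. max 0 (\<bar>X k \<omega>\<bar> - K))) / real n"
        using intT K by (simp add: integral_sum)
      finally show ?thesis .
    qed
    also have "\<dots> = integral\<^sup>L M (\<lambda>\<omega>. min \<bar>Y n \<omega>\<bar> K) + \<delta> K"
      using deq n by simp
    finally show ?thesis .
  qed
  have lim1: "(\<lambda>n. integral\<^sup>L M (\<lambda>\<omega>. min \<bar>Y n \<omega>\<bar> K)) \<longlonglongrightarrow> 0" if K: "0 \<le> K" for K
  proof -
    have "(\<lambda>n. integral\<^sup>L M (\<lambda>\<omega>. min \<bar>Y n \<omega>\<bar> K)) \<longlonglongrightarrow> integral\<^sup>L M (\<lambda>\<omega>. 0::real)"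
    proof (rule integral_dominated_convergence[where w="\<lambda>_. K"])
      show "(\<lambda>\<omega>. 0::real) \<in> borel_measurable M" by simp
      show "(\<lambda>\<omega>. min \<bar>Y n \<omega>\<bar> K) \<in> borel_measurable M" for n using measY by measurable
      show "integrable M (\<lambda>_. K)" by simp
      show "AE x in M. (\<lambda>n. min \<bar>Y n x\<bar> K) \<longlonglongrightarrow> 0" using conv
      proof eventually_elim
        case (elim \<omega>)
        then have "(\<lambda>n. Y n \<omega>) \<longlonglongrightarrow> 0" unfolding Y_def X_def by simp
        then have "(\<lambda>n. min \<bar>Y n \<omega>\<bar> K) \<longlonglongrightarrow> min \<bar>0\<bar> K" by (intro tendsto_min tendsto_rabs) auto
        then show ?case using K by simp
      qed
      show "AE x in M. norm (min \<bar>Y n x\<bar> K) \<le> K" for n using K by auto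
    qed
    then show ?thesis by simp
  qed
  have le_delta: "\<bar>\<mu>\<bar> \<le> \<delta> K" if K: "0 \<le> K" for K
  proof -
    have "(\<lambda>n. integral\<^sup>L M (\<lambda>\<omega>. min \<bar>Y n \<omega>\<bar> K) + \<delta> K) \<longlonglongrightarrow> 0 + \<delta> K"
      by (intro tendsto_add lim1[OF K] tendsto_const)
    moreover have "\<exists>N. \<forall>n\<ge>N. \<bar>\<mu>\<bar> \<le> integral\<^sup>L M (\<lambda>\<omega>. min \<bar>Y n \<omega>\<bar> K) + \<delta> K"
      using bound K by (intro exI[of _ 1]) auto
    ultimately show ?thesis using LIMSEQ_le_const by fastforce
  qed
  have lim2: "(\<lambda>K::nat. \<delta> (real K)) \<longlonglongrightarrow> 0"
  proof -
    have "(\<lambda>K::nat. integral\<^sup>L M (\<lambda>\<omega>. max 0 (\<bar>X 1 \<omega>\<bar> - real K))) \<longlonglongrightarrow> integral\<^sup>L M (\<lambda>\<omega>. 0::real)"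
    proof (rule integral_dominated_convergence[where w="\<lambda>\<omega>. \<bar>X 1 \<omega>\<bar>"])
      show "(\<lambda>\<omega>. 0::real) \<in> borel_measurable M" by simp
      show "(\<lambda>\<omega>. max 0 (\<bar>X 1 \<omega>\<bar> - real K)) \<in> borel_measurable M" for K
        using measX[of 1] by measurable
      show "integrable M (\<lambda>\<omega>. \<bar>X 1 \<omega>\<bar>)" using intX[of 1] by simp
      show "AE x in M. (\<lambda>K. max 0 (\<bar>X 1 x\<bar> - real K)) \<longlonglongrightarrow> 0"
      proof (rule AE_I2, rule tendsto_eventually)
        fix \<omega>
        show "\<forall>\<^sub>F K in sequentially. max 0 (\<bar>X 1 \<omega>\<bar> - real K) = 0"
          unfolding eventually_sequentially
          by (rule exI[of _ "nat \<lceil>\<bar>X 1 \<omega>\<bar>\<rceil>"]) linarith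
      qed
      show "AE x in M. norm (max 0 (\<bar>X 1 x\<bar> - real K)) \<le> \<bar>X 1 x\<bar>" for K by auto
    qed
    then show ?thesis unfolding \<delta>_def by simp
  qed
  have "\<bar>\<mu>\<bar> \<le> 0"
    using lim2 by (rule LIMSEQ_le_const) (use le_delta in auto)
  then show ?thesis unfolding \<mu>_def by simp
qed

end

lemma limsup_bound:
  fixes t a :: "nat \<Rightarrow> real"
  assumes ls: "limsup (\<lambda>n. ereal (t n / a n)) < \<infinity>" and apos: "\<And>n. 1 \<le> n \<Longrightarrow> 0 < a n"
  shows "\<exists>B>0. \<exists>N\<ge>1. \<forall>n\<ge>N. t n < B * a n"
proof -
  obtain B0 where B0: "limsup (\<lambda>n. ereal (t n / a n)) < ereal B0"
    using ereal_dense2[OF ls] by blast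
  have "\<forall>\<^sub>F n in sequentially. ereal (t n / a n) < ereal B0" by (rule Limsup_lessD[OF B0])
  then obtain N0 where N0: "\<And>n. N0 \<le> n \<Longrightarrow> t n / a n < B0" unfolding eventually_sequentially by auto
  define B where "B = max B0 1"
  define N where "N = max N0 1"
  have "t n < B * a n" if "N \<le> n" for n
  proof -
    have an: "0 < a n" using apos that unfolding N_def by auto
    have "t n / a n < B" using N0[of n] that unfolding N_def B_def by auto
    then show ?thesis using an by (simp add: divide_less_eq)
  qed
  moreover have "0 < B" "1 \<le> N" unfolding B_def N_def by auto
  ultimately show ?thesis by blast
qed

lemma mono_from1:
  fixes a :: "nat \<Rightarrow> real"
  assumes "\<And>n. 1 \<le> n \<Longrightarrow> a n \<le> a (Suc n)"
  shows "1 \<le> m \<Longrightarrow> m \<le> n \<Longrightarrow> a m \<le> a n"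
proof (induction n)
  case 0 then show ?case by simp
next
  case (Suc n)
  show ?case
  proof (cases "m = Suc n")
    case True then show ?thesis by simp
  next
    case False
    then have "m \<le> n" using Suc by simp
    then show ?thesis using Suc assms[of n] by simp
  qed
qed

lemma hh_le: assumes "0 < Cb" shows "real (nat \<lfloor>real n / (4 * Cb)\<rfloor>) \<le> real n / (4 * Cb)"
proof -
  have "0 \<le> real n / (4 * Cb)" using assms by simp
  then show ?thesis by (simp add: of_nat_nat)
qed

lemma hh_ge: assumes "0 < Cb" "8 * Cb \<le> real n"
  shows "real n / (8 * Cb) \<le> real (nat \<lfloor>real n / (4 * Cb)\<rfloor>)"
proof -
  have x0: "0 \<le> real n / (4 * Cb)" using assms by simp
  have "real n / (4 * Cb) - 1 \<le> real (nat \<lfloor>real n / (4 * Cb)\<rfloor>)"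
    using x0 by (simp add: of_nat_nat)
  moreover have "real n / (8 * Cb) \<le> real n / (4 * Cb) - 1"
  proof -
    have "1 \<le> real n / (8 * Cb)" using assms by simp
    moreover have "real n / (4 * Cb) = 2 * (real n / (8 * Cb))" by (simp add: field_simps)
    ultimately show ?thesis by linarith
  qed
  ultimately show ?thesis by linarith
qed

lemma q_le_p:
  fixes p :: "nat \<Rightarrow> nat"
  assumes Cb: "0 < Cb" and pb: "\<And>n. 1 \<le> n \<Longrightarrow> real n / real (p n) \<le> Cb"
    and ppos: "\<And>n. 1 \<le> n \<Longrightarrow> 0 < p n" and n: "2 \<le> n"
  shows "2 * nat \<lfloor>real n / (4 * Cb)\<rfloor> \<le> p n" "2 * nat \<lfloor>real n / (4 * Cb)\<rfloor> \<le> p (n - 1)"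
proof -
  have plow: "real m / Cb \<le> real (p m)" if "1 \<le> m" for m
  proof -
    have "0 < real (p m)" using ppos[OF that] by simp
    then have "real m \<le> Cb * real (p m)" using pb[OF that] by (simp add: divide_le_eq mult.commute)
    then show ?thesis using Cb by (simp add: divide_le_eq mult.commute)
  qed
  have q: "real (2 * nat \<lfloor>real n / (4 * Cb)\<rfloor>) \<le> real n / (2 * Cb)"
    using hh_le[OF Cb, of n] by simp
  have "real n / (2 * Cb) \<le> real n / Cb" using Cb by (simp add: field_simps)
  then show "2 * nat \<lfloor>real n / (4 * Cb)\<rfloor> \<le> p n" using q plow[of n] n by linarith
  have "real n / (2 * Cb) \<le> real (n - 1) / Cb"
  proof -
    have "real n \<le> 2 * real (n - 1)" using n by simp
    then show ?thesis using Cb by (simp add: field_simps)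
  qed
  then show "2 * nat \<lfloor>real n / (4 * Cb)\<rfloor> \<le> p (n - 1)" using q plow[of "n - 1"] n by linarith
qed


theorem lemma3p2:
  fixes M :: "'a measure"
    and U V :: "nat \<Rightarrow> nat \<Rightarrow> 'a \<Rightarrow> real"
    and p :: "nat \<Rightarrow> nat"
    and a :: "nat \<Rightarrow> real"
  assumes "prob_space M"
    and indep: "prob_space.indep_vars M (\<lambda>_. borel :: (real \<times> real) measure)
                  (\<lambda>(k, i) \<omega>. (U k i \<omega>, V k i \<omega>)) {(k, i). 1 \<le> k \<and> 1 \<le> i}"
    and ident: "\<And>k i. 1 \<le> k \<Longrightarrow> 1 \<le> i \<Longrightarrow>
                  distr M (borel :: (real \<times> real) measure) (\<lambda>\<omega>. (U k i \<omega>, V k i \<omega>)) =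
                  distr M (borel :: (real \<times> real) measure) (\<lambda>\<omega>. (U 1 1 \<omega>, V 1 1 \<omega>))"
    and p_pos: "\<And>n. 1 \<le> n \<Longrightarrow> 0 < p n"
    and p_bounds: "\<exists>c C. 0 < c \<and>
                     (\<forall>n\<ge>1. c \<le> real n / real (p n) \<and> real n / real (p n) \<le> C)"
    and a_pos: "\<And>n. 1 \<le> n \<Longrightarrow> 0 < a n"
    and a_mono: "\<And>n. 1 \<le> n \<Longrightarrow> a n \<le> a (Suc n)"
    and a_ratio: "(\<lambda>n. a (Suc n) / a n) \<longlonglongrightarrow> 1"
    and a_doubling: "liminf (\<lambda>n. ereal (a (2 * n) / a n)) > 1"
    and limsup_fin: "AE \<omega> in M. limsup (\<lambda>n. ereal (Tstat U V (p n) n \<omega> / a n)) < \<infinity>"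
  shows "summable (\<lambda>n. measure M {\<omega> \<in> space M. Mstat U V n \<omega> \<ge> a n})
         \<and> (((\<lambda>n. a n / real n) \<longlonglongrightarrow> 0) \<longrightarrow>
              (integral\<^sup>L M (U 1 1)) * (integral\<^sup>L M (V 1 1)) = 0)"
proof -
  interpret iid_setting M U V
    using assms(1) indep ident unfolding iid_setting_def iid_setting_axioms_def by blast
  obtain c Cb where cC: "0 < c" "\<And>n. 1 \<le> n \<Longrightarrow> c \<le> real n / real (p n) \<and> real n / real (p n) \<le> Cb"
    using p_bounds by blast
  have Cb: "0 < Cb" using cC(1) cC(2)[of 1] by linarith
  have pb: "\<And>n. 1 \<le> n \<Longrightarrow> real n / real (p n) \<le> Cb" using cC(2) by blast
  define q where "q = (\<lambda>n. 2 * nat \<lfloor>real n / (4 * Cb)\<rfloor>)"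
  have amono: "\<And>m n. 1 \<le> m \<Longrightarrow> m \<le> n \<Longrightarrow> a m \<le> a n" using mono_from1[of a] a_mono by blast
  have Tmem: "\<bar>\<Sum>k=1..n. U k i \<omega> * V k j \<omega>\<bar> \<le> Tstat U V pp n \<omega>"
    if "i \<in> {1..pp}" "j \<in> {1..pp}" "i \<noteq> j" for pp n i j \<omega>
    unfolding Tstat_def by (rule Max_pairset_member) (use that in auto)
  have AEB: "AE \<omega> in M. \<exists>B>0. \<exists>N\<ge>1. \<forall>n\<ge>N. Tstat U V (p n) n \<omega> < B * a n"
    using limsup_fin
  proof eventually_elim
    case (elim \<omega>)
    show ?case by (rule limsup_bound[OF elim a_pos])
  qed
  have qp: "q n \<le> p n" "q n \<le> p (n - 1)" if "2 \<le> n" for n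
    using q_le_p[OF Cb pb p_pos that] unfolding q_def by auto
  have AEC: "AE \<omega> in M. \<exists>C::nat. \<forall>\<^sub>F n in sequentially. \<not> Ev U V n {1..q n} (real C * a n) \<omega>"
    using AEB
  proof eventually_elim
    case (elim \<omega>)
    then obtain B N where B: "0 < B" "1 \<le> N" "\<And>n. N \<le> n \<Longrightarrow> Tstat U V (p n) n \<omega> < B * a n"
      by blast
    define C where "C = nat \<lceil>2 * B\<rceil>"
    have "\<not> Ev U V n {1..q n} (real C * a n) \<omega>" if n: "Suc N \<le> n" for n
    proof
      assume "Ev U V n {1..q n} (real C * a n) \<omega>"
      then obtain i j where ij: "i \<in> {1..q n}" "j \<in> {1..q n}" "i \<noteq> j"
        "real C * a n \<le> \<bar>U n i \<omega> * V n j \<omega>\<bar>" unfolding Ev_def by blast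
      have n2: "2 \<le> n" using n B(2) by simp
      obtain m where m: "n = Suc m" using n2 by (cases n) auto
      have Sn: "(\<Sum>k=1..n. U k i \<omega> * V k j \<omega>) = (\<Sum>k=1..n-1. U k i \<omega> * V k j \<omega>) + U n i \<omega> * V n j \<omega>"
        unfolding m by simp
      have t1: "\<bar>\<Sum>k=1..n. U k i \<omega> * V k j \<omega>\<bar> \<le> Tstat U V (p n) n \<omega>"
        using ij qp[OF n2] by (intro Tmem) auto
      have t2: "\<bar>\<Sum>k=1..n-1. U k i \<omega> * V k j \<omega>\<bar> \<le> Tstat U V (p (n-1)) (n-1) \<omega>"
        using ij qp[OF n2] by (intro Tmem) auto
      have "\<bar>U n i \<omega> * V n j \<omega>\<bar> = \<bar>(\<Sum>k=1..n. U k i \<omega> * V k j \<omega>) - (\<Sum>k=1..n-1. U k i \<omega> * V k j \<omega>)\<bar>"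
        unfolding Sn by simp
      also have "\<dots> \<le> \<bar>\<Sum>k=1..n. U k i \<omega> * V k j \<omega>\<bar> + \<bar>\<Sum>k=1..n-1. U k i \<omega> * V k j \<omega>\<bar>"
        by (rule abs_triangle_ineq4)
      also have "\<dots> < B * a n + B * a (n - 1)"
      proof -
        have "N \<le> n - 1" "N \<le> n" using n by auto
        then show ?thesis using t1 t2 B(3)[of n] B(3)[of "n - 1"] by linarith
      qed
      also have "\<dots> \<le> 2 * B * a n"
      proof -
        have "a (n - 1) \<le> a n" using n2 by (intro amono) auto
        then show ?thesis using B(1) by (simp add: mult_left_mono algebra_simps)
      qed
      also have "\<dots> \<le> real C * a n"
      proof (rule mult_right_mono)
        show "2 * B \<le> real C" unfolding C_def by (rule real_nat_ceiling_ge)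
      qed (use a_pos[of n] n2 in simp)
      finally show False using ij(4) by simp
    qed
    then show ?case unfolding eventually_sequentially by blast
  qed
  obtain C :: nat where C: "1 \<le> C" "summable (\<lambda>n. prob {\<omega>\<in>space M. Ev U V n {1..q n} (real C * a n) \<omega>})"
    using exists_C_summable[of a q] AEC a_pos by (auto simp: less_imp_le)
  have sumF: "summable (\<lambda>n. FF (q n) (real C * a n))"
  proof (rule summable_comparison_test'[OF C(2), where N=1])
    fix n :: nat assume n: "1 \<le> n"
    have "prob {\<omega>\<in>space M. Ev U V n {1..q n} (real C * a n) \<omega>} = FF (q n) (real C * a n)"
      using Ev_prob_eq[of "{1..q n}" n] n unfolding FF_def by simp
    then show "norm (FF (q n) (real C * a n)) \<le> prob {\<omega>\<in>space M. Ev U V n {1..q n} (real C * a n) \<omega>}"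
      by (simp add: FF_def)
  qed
  obtain \<beta> where beta: "1 < ereal \<beta>" "ereal \<beta> < liminf (\<lambda>n. ereal (a (2 * n) / a n))"
    using ereal_dense2[OF a_doubling] by blast
  have "\<forall>\<^sub>F n in sequentially. ereal \<beta> < ereal (a (2 * n) / a n)"
    by (rule less_LiminfD[OF beta(2)])
  then obtain N0' where N0': "\<And>n. N0' \<le> n \<Longrightarrow> \<beta> < a (2 * n) / a n"
    unfolding eventually_sequentially by auto
  define N0 where "N0 = max N0' 1"
  have dbl: "\<beta> * a n \<le> a (2 * n)" if "N0 \<le> n" for n
  proof -
    have an: "0 < a n" using a_pos that unfolding N0_def by auto
    have "\<beta> < a (2 * n) / a n" using N0' that unfolding N0_def by auto
    then show ?thesis using an by (simp add: less_divide_eq less_imp_le)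
  qed
  have sumM: "summable (\<lambda>n. FF n (a n))"
  proof (rule sum_transfer[where F=FF and q=q and C="real C" and a=a])
    show "0 \<le> FF m x" for m x unfolding FF_def by simp
    show "FF m y \<le> FF m x" if "x \<le> y" for m x y
      unfolding FF_def
      by (rule finite_measure_mono) (auto intro!: Ev_sets elim: Ev_anti[OF that, rotated])
    show "FF m x \<le> real (L * L) * FF q' x" if "m \<le> L * h" "2 * h \<le> q'" for m L h q' x
      by (rule FF_block[OF that])
    show "summable (\<lambda>n. FF (q n) (real C * a n))" by (rule sumF)
    show "0 < a n" if "1 \<le> n" for n using a_pos that .
    show "a m \<le> a n" if "1 \<le> m" "m \<le> n" for m n using amono that .
    show "1 < \<beta>" using beta(1) by simp
    show "\<beta> * a n \<le> a (2 * n)" if "N0 \<le> n" for n using dbl that .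
    show "0 < 1 / (8 * Cb)" using Cb by simp
    show "1 / (8 * Cb) * real m \<le> real (q m div 2)" if "nat \<lceil>8 * Cb\<rceil> \<le> m" for m
    proof -
      have "8 * Cb \<le> real m" using that by linarith
      then have "real m / (8 * Cb) \<le> real (nat \<lfloor>real m / (4 * Cb)\<rfloor>)" by (rule hh_ge[OF Cb])
      then show ?thesis unfolding q_def by simp
    qed
  qed
  have part1: "summable (\<lambda>n. measure M {\<omega> \<in> space M. Mstat U V n \<omega> \<ge> a n})"
  proof -
    have "measure M {\<omega> \<in> space M. Mstat U V n \<omega> \<ge> a n} = FF n (a n)" if n: "1 \<le> n" for n
    proof -
      have "{\<omega> \<in> space M. Mstat U V n \<omega> \<ge> a n} = {\<omega>\<in>space M. Ev U V 1 {1..n} (a n) \<omega>}"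
        unfolding Mstat_def Ev_def
        using Max_pairset_ge[of "{1..n}" "a n" "\<lambda>i j. U 1 i _ * V 1 j _"] a_pos[OF n] by auto
      then show ?thesis unfolding FF_def by simp
    qed
    then have "\<forall>\<^sub>F n in sequentially. measure M {\<omega> \<in> space M. Mstat U V n \<omega> \<ge> a n} = FF n (a n)"
      unfolding eventually_sequentially by blast
    from summable_cong[OF this] sumM show ?thesis by simp
  qed
  have part2: "integral\<^sup>L M (U 1 1) * integral\<^sup>L M (V 1 1) = 0" if lim: "(\<lambda>n. a n / real n) \<longlonglongrightarrow> 0"
  proof (rule mean_zero)
    show "AE \<omega> in M. (\<lambda>n. (\<Sum>k=1..n. U k 1 \<omega> * V k 2 \<omega>) / real n) \<longlonglongrightarrow> 0"
      using AEB
    proof eventually_elim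
      case (elim \<omega>)
      then obtain B N where B: "0 < B" "1 \<le> N" "\<And>n. N \<le> n \<Longrightarrow> Tstat U V (p n) n \<omega> < B * a n"
        by blast
      have ev: "\<forall>\<^sub>F n in sequentially. norm ((\<Sum>k=1..n. U k 1 \<omega> * V k 2 \<omega>) / real n) \<le> B * (a n / real n)"
        unfolding eventually_sequentially
      proof (intro exI allI impI)
        fix n assume n: "max (max N 2) (nat \<lceil>8 * Cb\<rceil>) \<le> n"
        have n2: "2 \<le> n" and nN: "N \<le> n" using n by auto
        have "8 * Cb \<le> real n" using n by linarith
        then have "real n / (8 * Cb) \<le> real (nat \<lfloor>real n / (4 * Cb)\<rfloor>)" by (rule hh_ge[OF Cb])
        moreover have "1 \<le> real n / (8 * Cb)" using \<open>8 * Cb \<le> real n\<close> Cb by simp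
        ultimately have "2 \<le> q n" unfolding q_def by linarith
        then have "2 \<le> p n" using qp(1)[OF n2] by simp
        then have "\<bar>\<Sum>k=1..n. U k 1 \<omega> * V k 2 \<omega>\<bar> \<le> Tstat U V (p n) n \<omega>" by (intro Tmem) auto
        also have "\<dots> \<le> B * a n" using B(3)[OF nN] by simp
        finally have "\<bar>\<Sum>k=1..n. U k 1 \<omega> * V k 2 \<omega>\<bar> / real n \<le> B * a n / real n"
          by (rule divide_right_mono) simp
        then show "norm ((\<Sum>k=1..n. U k 1 \<omega> * V k 2 \<omega>) / real n) \<le> B * (a n / real n)"
          by simp
      qed
      have "(\<lambda>n. B * (a n / real n)) \<longlonglongrightarrow> B * 0" by (intro tendsto_mult tendsto_const lim)
      then have "(\<lambda>n. B * (a n / real n)) \<longlonglongrightarrow> 0" by simp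
      then show ?case by (rule Lim_null_comparison[OF ev])
    qed
  qed
  show ?thesis using part1 part2 by blast
qed


end
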